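(* For $k\geq1$, the star $K_{1,k+2}$ has spectator floor $k$ and is minor-minimal among graphs with spectator floor $k$ (no proper minor of it has spectator floor $k$).
   Context: All graphs are finite, have at least one vertex, have no loops, and may have multiple (parallel) edges. A minor of $H$ is any graph obtained from $H$ by a sequence of: deleting an isolated vertex, deleting an edge, contracting an edge that has no edge parallel to it. A unique shortest path is a shortest $u$–$v$ path $P$ such that every $u$–$v$ path with the same number of vertices is identical to $P$, where two paths with different edge sequences are different even if their vertex sequences agree; a single vertex is a unique shortest path. The parade number $\mathrm{usp}(G)$ is the largest number of vertices of a unique shortest path in $G$. The spectator number is $\mathrm{sp}(G)=|V(G)|-\mathrm{usp}(G)$. The spectator floor $\lfloor \mathrm{sp}\rfloor(G)$ is the minimum of $\mathrm{sp}(H)$ over all graphs $H$ of which $G$ is a minor. *)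

theory Defs
  imports Main
begin

text \<open>Finite multigraphs without loops. Vertices and edges are labelled by natural
numbers; every finite multigraph is isomorphic to one of this form.\<close>

record mgraph =
  verts :: "nat set"
  edges :: "nat set"
  endpts :: "nat \<Rightarrow> nat set"

definition wf_graph :: "mgraph \<Rightarrow> bool" where
  "wf_graph G \<longleftrightarrow> finite (verts G) \<and> verts G \<noteq> {} \<and> finite (edges G) \<and>
     (\<forall>e\<in>edges G. endpts G e \<subseteq> verts G \<and> card (endpts G e) = 2)"

definition graph_iso :: "mgraph \<Rightarrow> mgraph \<Rightarrow> bool" where
  "graph_iso G H \<longleftrightarrow> (\<exists>f g. bij_betw f (verts G) (verts H) \<and> bij_betw g (edges G) (edges H) \<and>
     (\<forall>e\<in>edges G. endpts H (g e) = f ` endpts G e))"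

inductive minor_step :: "mgraph \<Rightarrow> mgraph \<Rightarrow> bool" where
  del_vertex: "v \<in> verts H \<Longrightarrow> verts H - {v} \<noteq> {} \<Longrightarrow> (\<forall>e\<in>edges H. v \<notin> endpts H e) \<Longrightarrow>
     minor_step H (H\<lparr>verts := verts H - {v}\<rparr>)"
| del_edge: "e \<in> edges H \<Longrightarrow> minor_step H (H\<lparr>edges := edges H - {e}\<rparr>)"
| contract: "e \<in> edges H \<Longrightarrow> endpts H e = {u, w} \<Longrightarrow> u \<noteq> w \<Longrightarrow>
     (\<forall>f\<in>edges H - {e}. endpts H f \<noteq> endpts H e) \<Longrightarrow>
     minor_step H \<lparr>verts = verts H - {w}, edges = edges H - {e},
        endpts = (\<lambda>f. if w \<in> endpts H f then insert u (endpts H f - {w}) else endpts H f)\<rparr>"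

definition is_minor :: "mgraph \<Rightarrow> mgraph \<Rightarrow> bool" where
  "is_minor G H \<longleftrightarrow> (\<exists>G'. minor_step\<^sup>*\<^sup>* H G' \<and> graph_iso G' G)"

definition is_path :: "mgraph \<Rightarrow> nat list \<Rightarrow> nat list \<Rightarrow> bool" where
  "is_path G vs es \<longleftrightarrow> vs \<noteq> [] \<and> distinct vs \<and> set vs \<subseteq> verts G \<and> set es \<subseteq> edges G \<and>
     length es + 1 = length vs \<and>
     (\<forall>i < length es. endpts G (es ! i) = {vs ! i, vs ! Suc i})"

definition is_uv_path :: "mgraph \<Rightarrow> nat \<Rightarrow> nat \<Rightarrow> nat list \<Rightarrow> nat list \<Rightarrow> bool" where
  "is_uv_path G u v vs es \<longleftrightarrow> is_path G vs es \<and> hd vs = u \<and> last vs = v"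

definition is_usp :: "mgraph \<Rightarrow> nat list \<Rightarrow> nat list \<Rightarrow> bool" where
  "is_usp G vs es \<longleftrightarrow> is_path G vs es \<and>
     (\<forall>vs' es'. is_uv_path G (hd vs) (last vs) vs' es' \<longrightarrow> length vs \<le> length vs') \<and>
     (\<forall>vs' es'. is_uv_path G (hd vs) (last vs) vs' es' \<and> length vs' = length vs \<longrightarrow>
        vs' = vs \<and> es' = es)"

definition usp :: "mgraph \<Rightarrow> nat" where
  "usp G = Max {length vs | vs es. is_usp G vs es}"

definition sp :: "mgraph \<Rightarrow> nat" where
  "sp G = card (verts G) - usp G"

definition sp_floor :: "mgraph \<Rightarrow> nat" where
  "sp_floor G = (LEAST n. \<exists>H. wf_graph H \<and> is_minor G H \<and> sp H = n)"

definition star :: "nat \<Rightarrow> mgraph" where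
  "star m = \<lparr>verts = {0..m}, edges = {1..m}, endpts = (\<lambda>e. {0, e})\<rparr>"

end

theory Submission
  imports Defs "HOL-Library.Transitive_Closure_Table"
begin

definition adj :: "mgraph \<Rightarrow> nat \<Rightarrow> nat \<Rightarrow> bool" where
  "adj H x y \<longleftrightarrow> (\<exists>e\<in>edges H. endpts H e = {x,y})"

definition ww :: "mgraph \<Rightarrow> bool" where
  "ww H \<longleftrightarrow> (\<forall>e\<in>edges H. endpts H e \<subseteq> verts H \<and> card (endpts H e) = 2)"

lemma adj_sym: "adj H x y \<Longrightarrow> adj H y x"
  unfolding adj_def by (auto simp: insert_commute)

lemma adj_verts: "adj H x y \<Longrightarrow> ww H \<Longrightarrow> x \<in> verts H \<and> y \<in> verts H"
  unfolding adj_def ww_def by auto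

lemma adj_neq: "adj H x y \<Longrightarrow> ww H \<Longrightarrow> x \<noteq> y"
  unfolding adj_def ww_def by fastforce

lemma wf_ww: "wf_graph H \<Longrightarrow> ww H"
  unfolding wf_graph_def ww_def by auto

lemma card2_mem: "card X = 2 \<Longrightarrow> w \<in> X \<Longrightarrow> \<exists>z. z \<noteq> w \<and> X = {w,z}"
  by (auto simp: card_2_iff)

lemma contract_ep:
  assumes "card X = 2" "X \<subseteq> V" "X \<noteq> {u,w}" "u \<in> V" "u \<noteq> w"
  shows "(if w \<in> X then insert u (X - {w}) else X) \<subseteq> V - {w} \<and>
         card (if w \<in> X then insert u (X - {w}) else X) = 2"
proof (cases "w \<in> X")
  case True
  then obtain z where z: "z \<noteq> w" "X = {w,z}" using card2_mem[OF assms(1) True] by blast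
  have zu: "z \<noteq> u" 
  proof
    assume "z = u" then have "X = {u,w}" using z(2) by blast
    then show False using assms(3) by blast
  qed
  have zV: "z \<in> V" using assms(2) z(2) by blast
  have e: "insert u (X - {w}) = {u,z}" using z by blast
  have "card {u,z} = 2" using zu by simp
  then show ?thesis using e zV z(1) True assms(4,5) by auto
next
  case False
  then show ?thesis using assms(1,2) by auto
qed
lemma ww_step: "minor_step H G \<Longrightarrow> ww H \<Longrightarrow> ww G"
proof (induction rule: minor_step.induct)
  case (del_vertex v H)
  then show ?case unfolding ww_def by auto
next
  case (del_edge e H)
  then show ?case unfolding ww_def by auto
next
  case (contract e H u w)
  have uv: "u \<in> verts H" using contract unfolding ww_def by auto
  show ?case unfolding ww_def
    using contract_ep[OF _ _ _ uv contract(3)] contract(2,4,5) unfolding ww_def by simp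
qed

lemma ww_steps: "minor_step\<^sup>*\<^sup>* H G \<Longrightarrow> ww H \<Longrightarrow> ww G"
  by (induction rule: rtranclp_induct) (auto intro: ww_step)

definition eqv :: "mgraph \<Rightarrow> mgraph \<Rightarrow> bool" where
  "eqv A B \<longleftrightarrow> verts A = verts B \<and> edges A = edges B \<and> (\<forall>e\<in>edges A. endpts A e = endpts B e)"

lemma eqv_step: "minor_step A A2 \<Longrightarrow> eqv A B \<Longrightarrow> \<exists>B2. minor_step B B2 \<and> eqv A2 B2"
proof (induction rule: minor_step.induct)
  case (del_vertex v H)
  show ?case
    apply (rule exI[of _ "B\<lparr>verts := verts B - {v}\<rparr>"])
    using del_vertex by (auto simp: eqv_def intro!: minor_step.del_vertex)
next
  case (del_edge e H)
  show ?case
    apply (rule exI[of _ "B\<lparr>edges := edges B - {e}\<rparr>"])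
    using del_edge by (auto simp: eqv_def intro!: minor_step.del_edge)
next
  case (contract e H u w)
  show ?case
    apply (rule exI[of _ "\<lparr>verts = verts B - {w}, edges = edges B - {e},
        endpts = (\<lambda>f. if w \<in> endpts B f then insert u (endpts B f - {w}) else endpts B f)\<rparr>"])
    using contract by (auto simp: eqv_def intro!: minor_step.contract)
qed

lemma eqv_steps: "minor_step\<^sup>*\<^sup>* A A2 \<Longrightarrow> eqv A B \<Longrightarrow> \<exists>B2. minor_step\<^sup>*\<^sup>* B B2 \<and> eqv A2 B2"
proof (induction rule: rtranclp_induct)
  case base then show ?case by auto
next
  case (step y z)
  then obtain B2 where "minor_step\<^sup>*\<^sup>* B B2" "eqv y B2" by auto
  with eqv_step[OF step(2) this(2)] show ?case by (meson rtranclp.rtrancl_into_rtrancl)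
qed

lemma eqv_iso: "eqv A B \<Longrightarrow> graph_iso A G \<Longrightarrow> graph_iso B G"
  unfolding eqv_def graph_iso_def by auto

lemma eqv_sym: "eqv A B \<Longrightarrow> eqv B A"
  unfolding eqv_def by auto

lemma iso_sym: "graph_iso G H \<Longrightarrow> ww G \<Longrightarrow> graph_iso H G"
proof -
  assume "graph_iso G H" "ww G"
  then obtain f g where f: "bij_betw f (verts G) (verts H)" and g: "bij_betw g (edges G) (edges H)"
    and e: "\<forall>e\<in>edges G. endpts H (g e) = f ` endpts G e" unfolding graph_iso_def by blast
  show "graph_iso H G" unfolding graph_iso_def
  proof (intro exI conjI ballI)
    show "bij_betw (inv_into (verts G) f) (verts H) (verts G)" using f by (rule bij_betw_inv_into)
    show "bij_betw (inv_into (edges G) g) (edges H) (edges G)" using g by (rule bij_betw_inv_into)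
    fix e' assume e': "e' \<in> edges H"
    define e0 where "e0 = inv_into (edges G) g e'"
    have e0: "e0 \<in> edges G" "g e0 = e'" using g e' unfolding e0_def
      by (auto simp: bij_betw_def inv_into_into f_inv_into_f)
    have sub: "endpts G e0 \<subseteq> verts G" using \<open>ww G\<close> e0 unfolding ww_def by auto
    have "inv_into (verts G) f ` endpts H e' = inv_into (verts G) f ` f ` endpts G e0"
      using e e0 by auto
    also have "\<dots> = endpts G e0" using sub f
      by (simp add: bij_betw_def inv_into_image_cancel)
    finally show "endpts G (inv_into (edges G) g e') = inv_into (verts G) f ` endpts H e'"
      unfolding e0_def by simp
  qed
qed

definition conn :: "mgraph \<Rightarrow> nat set \<Rightarrow> nat \<Rightarrow> nat \<Rightarrow> bool" where
  "conn H S a b \<longleftrightarrow> (\<lambda>x y. x \<in> S \<and> y \<in> S \<and> adj H x y)\<^sup>*\<^sup>* a b"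

definition model :: "mgraph \<Rightarrow> nat \<Rightarrow> nat set \<Rightarrow> (nat \<Rightarrow> nat set) \<Rightarrow> bool" where
  "model H m B0 L \<longleftrightarrow> B0 \<subseteq> verts H \<and> (\<forall>a\<in>B0. \<forall>b\<in>B0. conn H B0 a b) \<and>
     (\<forall>i\<in>{1..m}. L i \<subseteq> verts H \<and> L i \<inter> B0 = {} \<and> (\<exists>x\<in>L i. \<exists>y\<in>B0. adj H x y)) \<and>
     (\<forall>i\<in>{1..m}. \<forall>j\<in>{1..m}. i \<noteq> j \<longrightarrow> L i \<inter> L j = {})"

definition has_model :: "mgraph \<Rightarrow> nat \<Rightarrow> bool" where
  "has_model H m \<longleftrightarrow> (\<exists>B0 L. model H m B0 L)"

lemma conn_mono:
  assumes "conn H S a b" "\<And>x y. x \<in> S \<Longrightarrow> y \<in> S \<Longrightarrow> adj H x y \<Longrightarrow> adj H' x y" "S \<subseteq> S'"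
  shows "conn H' S' a b"
proof -
  have le: "(\<lambda>x y. x \<in> S \<and> y \<in> S \<and> adj H x y) \<le> (\<lambda>x y. x \<in> S' \<and> y \<in> S' \<and> adj H' x y)"
    using assms(2,3) by auto
  show ?thesis using rtranclp_mono[OF le, THEN predicate2D] assms(1) unfolding conn_def .
qed

lemma model_mono:
  assumes "model G m B0 L" "verts G \<subseteq> verts H" "\<And>x y. adj G x y \<Longrightarrow> adj H x y"
  shows "model H m B0 L"
  unfolding model_def
proof (intro conjI ballI impI)
  show "B0 \<subseteq> verts H" using assms(1,2) unfolding model_def by blast
  fix a b assume "a \<in> B0" "b \<in> B0"
  then have "conn G B0 a b" using assms(1) unfolding model_def by blast
  then show "conn H B0 a b" by (rule conn_mono) (auto intro: assms(3))
next
  fix i assume i: "i \<in> {1..m}"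
  have Li: "L i \<subseteq> verts G \<and> L i \<inter> B0 = {} \<and> (\<exists>x\<in>L i. \<exists>y\<in>B0. adj G x y)"
    using assms(1) i unfolding model_def by blast
  then show "L i \<subseteq> verts H" using assms(2) by blast
  show "L i \<inter> B0 = {}" using Li by blast
  show "\<exists>x\<in>L i. \<exists>y\<in>B0. adj H x y" using Li assms(3) by blast
next
  fix i j assume "i \<in> {1..m}" "j \<in> {1..m}" "i \<noteq> j"
  then show "L i \<inter> L j = {}" using assms(1) unfolding model_def by blast
qed

lemma rtranclp_lift:
  assumes "R\<^sup>*\<^sup>* a b" "\<And>x y. R x y \<Longrightarrow> S\<^sup>*\<^sup>* x y"
  shows "S\<^sup>*\<^sup>* a b"
  using assms(1) by (induction rule: rtranclp_induct) (auto dest: assms(2))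

lemma contract_adj:
  assumes ww: "ww H" and e: "e \<in> edges H" "endpts H e = {u, w}" "u \<noteq> w"
    and a: "adj \<lparr>verts = verts H - {w}, edges = edges H - {e},
        endpts = (\<lambda>f. if w \<in> endpts H f then insert u (endpts H f - {w}) else endpts H f)\<rparr> x y"
  shows "\<exists>x' y'. adj H x' y' \<and> (x' = x \<or> (x = u \<and> x' = w)) \<and> (y' = y \<or> (y = u \<and> y' = w))"
proof -
  obtain f where f: "f \<in> edges H" "f \<noteq> e"
    and fe: "(if w \<in> endpts H f then insert u (endpts H f - {w}) else endpts H f) = {x,y}"
    using a unfolding adj_def by auto
  have c2: "card (endpts H f) = 2" using ww f unfolding ww_def by auto
  show ?thesis
  proof (cases "w \<in> endpts H f")
    case True
    then obtain z where z: "z \<noteq> w" "endpts H f = {w,z}" using card2_mem[OF c2 True] by blast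
    have "insert u (endpts H f - {w}) = {u,z}" using z by blast
    then have uz: "{u,z} = {x,y}" using fe True by simp
    have az: "adj H w z" unfolding adj_def using f z by blast
    have "(x = u \<and> y = z) \<or> (x = z \<and> y = u)" using uz by (metis doubleton_eq_iff)
    then show ?thesis
    proof
      assume "x = u \<and> y = z" then show ?thesis using az by blast
    next
      assume "x = z \<and> y = u" then show ?thesis using adj_sym[OF az] by blast
    qed
  next
    case False
    then have "adj H x y" unfolding adj_def using f fe by auto
    then show ?thesis by blast
  qed
qed

definition lift :: "nat \<Rightarrow> nat \<Rightarrow> nat set \<Rightarrow> nat set" where
  "lift u w S = (if u \<in> S then insert w S else S)"

lemma lift_mem: "x \<in> lift u w S \<longleftrightarrow> x \<in> S \<or> (x = w \<and> u \<in> S)"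
  unfolding lift_def by auto

lemma model_back_contract:
  assumes ww: "ww H" and e: "e \<in> edges H" "endpts H e = {u, w}" "u \<noteq> w"
    and M: "model \<lparr>verts = verts H - {w}, edges = edges H - {e},
        endpts = (\<lambda>f. if w \<in> endpts H f then insert u (endpts H f - {w}) else endpts H f)\<rparr> m B0 L"
  shows "model H m (lift u w B0) (\<lambda>i. lift u w (L i))"
proof -
  let ?G = "\<lparr>verts = verts H - {w}, edges = edges H - {e},
        endpts = (\<lambda>f. if w \<in> endpts H f then insert u (endpts H f - {w}) else endpts H f)\<rparr>"
  have uw: "u \<in> verts H" "w \<in> verts H" using ww e unfolding ww_def by auto
  have auw1: "adj H u w" unfolding adj_def using e(1,2) by blast
  have auw2: "adj H w u" using adj_sym[OF auw1] .
  have vG: "verts ?G = verts H - {w}" by simp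
  have B0: "B0 \<subseteq> verts H - {w}" using M unfolding model_def vG by blast
  have Li: "L i \<subseteq> verts H - {w} \<and> L i \<inter> B0 = {} \<and> (\<exists>x\<in>L i. \<exists>y\<in>B0. adj ?G x y)"
    if "i \<in> {1..m}" for i
    using M that unfolding model_def vG by blast
  have Ld: "L i \<inter> L j = {}" if "i \<in> {1..m}" "j \<in> {1..m}" "i \<noteq> j" for i j
    using M that unfolding model_def by blast
  have Bc: "conn ?G B0 a b" if "a \<in> B0" "b \<in> B0" for a b
    using M that unfolding model_def by blast
  let ?B = "lift u w B0"
  let ?R = "\<lambda>x y. x \<in> ?B \<and> y \<in> ?B \<and> adj H x y"
  have sub: "x \<in> lift u w S" if "x \<in> S" for x S using that by (auto simp: lift_mem)
  have stepc: "?R\<^sup>*\<^sup>* x y" if xyB: "x \<in> B0" "y \<in> B0" "adj ?G x y" for x y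
  proof -
    obtain x' y' where xy: "adj H x' y'" "x' = x \<or> (x = u \<and> x' = w)" "y' = y \<or> (y = u \<and> y' = w)"
      using contract_adj[OF ww e xyB(3)] by blast
    have x'B: "x' \<in> ?B" using xy(2) xyB(1) by (auto simp: lift_mem)
    have y'B: "y' \<in> ?B" using xy(3) xyB(2) by (auto simp: lift_mem)
    have xB: "x \<in> ?B" "y \<in> ?B" using xyB sub by auto
    have R: "?R\<^sup>*\<^sup>* x x'"
    proof (cases "x' = x")
      case True then show ?thesis by simp
    next
      case False then have "x = u" "x' = w" using xy by auto
      then have "?R x x'" using auw1 x'B xB by simp
      then show ?thesis by (rule r_into_rtranclp)
    qed
    have R2: "?R\<^sup>*\<^sup>* y' y"
    proof (cases "y' = y")
      case True then show ?thesis by simp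
    next
      case False then have "y = u" "y' = w" using xy by auto
      then have "?R y' y" using auw2 y'B xB by simp
      then show ?thesis by (rule r_into_rtranclp)
    qed
    have "?R x' y'" using x'B y'B xy(1) by simp
    then have R1: "?R\<^sup>*\<^sup>* x' y'" by (rule r_into_rtranclp)
    show ?thesis using rtranclp_trans[OF rtranclp_trans[OF R R1] R2] .
  qed
  have connB: "?R\<^sup>*\<^sup>* a b" if "a \<in> B0" "b \<in> B0" for a b
  proof -
    have "(\<lambda>x y. x \<in> B0 \<and> y \<in> B0 \<and> adj ?G x y)\<^sup>*\<^sup>* a b" using Bc[OF that] unfolding conn_def .
    then show ?thesis
      by (rule rtranclp_lift) (use stepc in blast)
  qed
  have connB2: "conn H ?B a b" if ab: "a \<in> ?B" "b \<in> ?B" for a b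
  proof -
    have wu: "?R\<^sup>*\<^sup>* w u" "?R\<^sup>*\<^sup>* u w" if "u \<in> B0"
    proof -
      have "w \<in> ?B" "u \<in> ?B" using that by (auto simp: lift_mem)
      then show "?R\<^sup>*\<^sup>* w u" "?R\<^sup>*\<^sup>* u w" using auw1 auw2 by (auto intro!: r_into_rtranclp)
    qed
    have a1: "a \<in> B0 \<or> (a = w \<and> u \<in> B0)" using ab(1) by (auto simp: lift_mem)
    have b1: "b \<in> B0 \<or> (b = w \<and> u \<in> B0)" using ab(2) by (auto simp: lift_mem)
    have "?R\<^sup>*\<^sup>* a b"
    proof (cases "a \<in> B0")
      case True
      show ?thesis
      proof (cases "b \<in> B0")
        case True2: True
        show ?thesis using connB[OF True True2] .
      next
        case False
        then have "b = w" "u \<in> B0" using b1 by auto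
        then show ?thesis using rtranclp_trans[OF connB[OF True \<open>u \<in> B0\<close>] wu(2)] by simp
      qed
    next
      case False
      then have aw: "a = w" "u \<in> B0" using a1 by auto
      show ?thesis
      proof (cases "b \<in> B0")
        case True2: True
        show ?thesis using rtranclp_trans[OF wu(1)[OF aw(2)] connB[OF aw(2) True2]] aw by simp
      next
        case False
        then have "b = w" using b1 by auto
        then show ?thesis using aw by simp
      qed
    qed
    then show ?thesis unfolding conn_def .
  qed
  show ?thesis unfolding model_def
  proof (intro conjI ballI impI)
    show "?B \<subseteq> verts H" using B0 uw unfolding lift_def by auto
    show "\<And>a b. a \<in> ?B \<Longrightarrow> b \<in> ?B \<Longrightarrow> conn H ?B a b" by (rule connB2)
    fix i assume i: "i \<in> {1..m}"
    note Lii = Li[OF i]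
    show "lift u w (L i) \<subseteq> verts H" using Lii uw unfolding lift_def by auto
    show "lift u w (L i) \<inter> ?B = {}"
    proof (rule ccontr)
      assume "lift u w (L i) \<inter> ?B \<noteq> {}"
      then obtain z where "z \<in> lift u w (L i)" "z \<in> ?B" by blast
      then have "(z \<in> L i \<or> (z = w \<and> u \<in> L i)) \<and> (z \<in> B0 \<or> (z = w \<and> u \<in> B0))" by (auto simp: lift_mem)
      then show False using Lii B0 by blast
    qed
    obtain x y where xy: "x \<in> L i" "y \<in> B0" "adj ?G x y" using Lii by blast
    obtain x' y' where x'y': "adj H x' y'" "x' = x \<or> (x = u \<and> x' = w)" "y' = y \<or> (y = u \<and> y' = w)"
      using contract_adj[OF ww e xy(3)] by blast
    have "x' \<in> lift u w (L i)" using x'y'(2) xy(1) by (auto simp: lift_mem)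
    moreover have "y' \<in> ?B" using x'y'(3) xy(2) by (auto simp: lift_mem)
    ultimately show "\<exists>x\<in>lift u w (L i). \<exists>y\<in>?B. adj H x y" using x'y'(1) by blast
  next
    fix i j assume ij: "i \<in> {1..m}" "j \<in> {1..m}" "i \<noteq> j"
    show "lift u w (L i) \<inter> lift u w (L j) = {}"
    proof (rule ccontr)
      assume "lift u w (L i) \<inter> lift u w (L j) \<noteq> {}"
      then obtain z where "z \<in> lift u w (L i)" "z \<in> lift u w (L j)" by blast
      then have "(z \<in> L i \<or> (z = w \<and> u \<in> L i)) \<and> (z \<in> L j \<or> (z = w \<and> u \<in> L j))" by (auto simp: lift_mem)
      then show False using Ld[OF ij] Li[OF ij(1)] Li[OF ij(2)] by blast
    qed
  qed
qed

lemma model_back: "minor_step H G \<Longrightarrow> ww H \<Longrightarrow> has_model G m \<Longrightarrow> has_model H m"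
proof (induction rule: minor_step.induct)
  case (del_vertex v H)
  then obtain B0 L where "model (H\<lparr>verts := verts H - {v}\<rparr>) m B0 L" unfolding has_model_def by blast
  then have "model H m B0 L" by (rule model_mono) (auto simp: adj_def)
  then show ?case unfolding has_model_def by blast
next
  case (del_edge e H)
  then obtain B0 L where "model (H\<lparr>edges := edges H - {e}\<rparr>) m B0 L" unfolding has_model_def by blast
  then have "model H m B0 L" by (rule model_mono) (auto simp: adj_def)
  then show ?case unfolding has_model_def by blast
next
  case (contract e H u w)
  then show ?case using model_back_contract[OF contract(5,1,2,3)] unfolding has_model_def by blast
qed

lemma model_back_steps: "minor_step\<^sup>*\<^sup>* H G \<Longrightarrow> ww H \<Longrightarrow> has_model G m \<Longrightarrow> has_model H m"
proof (induction rule: converse_rtranclp_induct)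
  case base then show ?case by simp
next
  case (step y z)
  have "ww z" by (rule ww_step[OF step(1) step.prems(1)])
  then have "has_model z m" using step.IH step.prems(2) by simp
  then show ?case by (rule model_back[OF step(1) step.prems(1)])
qed

lemma card2_eq: "card X = 2 \<Longrightarrow> x \<in> X \<Longrightarrow> y \<in> X \<Longrightarrow> x \<noteq> y \<Longrightarrow> X = {x,y}"
proof -
  assume a: "card X = 2" "x \<in> X" "y \<in> X" "x \<noteq> y"
  obtain z where z: "z \<noteq> x" "X = {x,z}" using card2_mem[OF a(1) a(2)] by blast
  have "y = z" using a(3,4) z(2) by simp
  then show ?thesis using z by simp
qed

lemma iso_model:
  assumes iso: "graph_iso G (star m)" and ww: "ww G"
  shows "has_model G m"
proof -
  have "\<exists>f g. bij_betw f (verts G) {0..m} \<and> bij_betw g (edges G) {1..m} \<and>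
     (\<forall>e\<in>edges G. {0, g e} = f ` endpts G e)"
    using iso unfolding graph_iso_def star_def by simp
  then obtain f g where f: "bij_betw f (verts G) {0..m}" and g: "bij_betw g (edges G) {1..m}"
    and ep: "\<forall>e\<in>edges G. {0, g e} = f ` endpts G e" by blast
  define h where "h = inv_into (verts G) f"
  have hv: "h i \<in> verts G \<and> f (h i) = i" if "i \<in> {0..m}" for i
  proof -
    have "i \<in> f ` verts G" using f that unfolding bij_betw_def by simp
    then show ?thesis unfolding h_def by (simp add: inv_into_into f_inv_into_f)
  qed
  have finj: "inj_on f (verts G)" using f by (simp add: bij_betw_def)
  have "model G m {h 0} (\<lambda>i. {h i})" unfolding model_def
  proof (intro conjI ballI impI)
    show "{h 0} \<subseteq> verts G" using hv[of 0] by simp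
    show "\<And>a b. a \<in> {h 0} \<Longrightarrow> b \<in> {h 0} \<Longrightarrow> conn G {h 0} a b" unfolding conn_def by simp
    fix i assume i: "i \<in> {1..m}"
    then have i0: "i \<in> {0..m}" "i \<noteq> 0" by auto
    show "{h i} \<subseteq> verts G" using hv[OF i0(1)] by simp
    show "{h i} \<inter> {h 0} = {}" using hv[OF i0(1)] hv[of 0] i0(2) by auto
    have "i \<in> g ` edges G" using g i unfolding bij_betw_def by simp
    then obtain e where e: "e \<in> edges G" "i = g e" by (rule imageE)
    have sub: "endpts G e \<subseteq> verts G" "card (endpts G e) = 2" using bspec[OF ww[unfolded ww_def] e(1)] by simp_all
    have "{0, g e} = f ` endpts G e" using bspec[OF ep e(1)] .
    then have img: "f ` endpts G e = {0, i}" using e(2) by simp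
    have "0 \<in> f ` endpts G e" using img by simp
    then obtain x where x: "x \<in> endpts G e" "0 = f x" by (rule imageE)
    have "i \<in> f ` endpts G e" using img by simp
    then obtain y where y: "y \<in> endpts G e" "i = f y" by (rule imageE)
    have "x = h 0" using inj_onD[OF finj, of x "h 0"] x sub(1) hv[of 0] by auto
    moreover have "y = h i" using inj_onD[OF finj, of y "h i"] y sub(1) hv[OF i0(1)] by auto
    moreover have "x \<noteq> y" using x y i0(2) by auto
    ultimately have "endpts G e = {h i, h 0}" using card2_eq[OF sub(2) y(1) x(1)] by simp
    then show "\<exists>x\<in>{h i}. \<exists>y\<in>{h 0}. adj G x y" unfolding adj_def using e(1) by blast
  next
    fix i j assume "i \<in> {1..m}" "j \<in> {1..m}" "i \<noteq> j"
    then show "{h i} \<inter> {h j} = {}" using hv[of i] hv[of j] by auto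
  qed
  then show ?thesis unfolding has_model_def by blast
qed

lemma minor_model:
  assumes "is_minor (star m) H" "ww H"
  shows "has_model H m"
proof -
  obtain G' where G': "minor_step\<^sup>*\<^sup>* H G'" "graph_iso G' (star m)"
    using assms(1) unfolding is_minor_def by blast
  have "ww G'" by (rule ww_steps[OF G'(1) assms(2)])
  then have "has_model G' m" by (rule iso_model[OF G'(2)])
  then show ?thesis by (rule model_back_steps[OF G'(1) assms(2)])
qed

lemma relpowp_sym:
  assumes sym: "\<And>x y. R x y \<Longrightarrow> R y x"
  shows "(R ^^ l) x y \<Longrightarrow> (R ^^ l) y x"
proof (induction l arbitrary: y)
  case 0 then show ?case by simp
next
  case (Suc l)
  from Suc.prems obtain z where z: "(R ^^ l) x z" "R z y" by (rule relpowp_Suc_E)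
  have "(R ^^ l) z x" using Suc.IH[OF z(1)] .
  with sym[OF z(2)] show ?case by (rule relpowp_Suc_I2)
qed

lemma relpow_path: "(R ^^ l) x y \<Longrightarrow> \<exists>xs. rtrancl_path R x xs y \<and> length xs = l"
proof (induction l arbitrary: x)
  case 0 then show ?case by (auto intro: rtrancl_path.base)
next
  case (Suc l)
  from Suc.prems obtain z where z: "R x z" "(R ^^ l) z y" by (rule relpowp_Suc_E2)
  obtain xs where xs: "rtrancl_path R z xs y" "length xs = l" using Suc.IH[OF z(2)] by blast
  have "rtrancl_path R x (z # xs) y" using z(1) xs(1) by (rule rtrancl_path.step)
  then show ?case using xs(2) by (intro exI[of _ "z # xs"]) simp
qed

lemma rtrancl_path_last: "rtrancl_path R x xs y \<Longrightarrow> last (x # xs) = y"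
  by (induction rule: rtrancl_path.induct) auto

lemma rtrancl_path_mono: "rtrancl_path R x xs y \<Longrightarrow> (\<And>a b. R a b \<Longrightarrow> R2 a b) \<Longrightarrow> rtrancl_path R2 x xs y"
  by (induction rule: rtrancl_path.induct) (auto intro: rtrancl_path.intros)

lemma rtrancl_path_set: "rtrancl_path R x xs y \<Longrightarrow> (\<And>a b. R a b \<Longrightarrow> b \<in> S) \<Longrightarrow> set xs \<subseteq> S"
  by (induction rule: rtrancl_path.induct) auto

lemma path_adj: "is_path H vs es \<Longrightarrow> Suc t < length vs \<Longrightarrow> adj H (vs ! t) (vs ! Suc t)"
  unfolding is_path_def adj_def by (metis add_less_cancel_right nth_mem plus_1_eq_Suc subsetD Suc_eq_plus1)

lemma path_walk: "is_path H vs es \<Longrightarrow> i \<le> j \<Longrightarrow> j < length vs \<Longrightarrow> (adj H ^^ (j - i)) (vs ! i) (vs ! j)"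
proof (induction j)
  case 0 then show ?case by simp
next
  case (Suc j)
  show ?case
  proof (cases "i = Suc j")
    case True then show ?thesis by simp
  next
    case False
    then have ij: "i \<le> j" using Suc.prems by simp
    have "(adj H ^^ (j - i)) (vs ! i) (vs ! j)" using Suc.IH[OF Suc.prems(1) ij] Suc.prems(3) by simp
    moreover have "adj H (vs ! j) (vs ! Suc j)" using path_adj[OF Suc.prems(1) Suc.prems(3)] .
    ultimately have "(adj H ^^ Suc (j - i)) (vs ! i) (vs ! Suc j)" by (rule relpowp_Suc_I)
    then show ?thesis using ij by (simp add: Suc_diff_le)
  qed
qed

lemma path_to_is_path:
  "rtrancl_path (adj H) x xs y \<Longrightarrow> distinct (x # xs) \<Longrightarrow> ww H \<Longrightarrow> x \<in> verts H \<Longrightarrow> \<exists>es. is_path H (x # xs) es"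
proof (induction rule: rtrancl_path.induct)
  case (base x)
  then show ?case unfolding is_path_def by (intro exI[of _ "[]"]) simp
next
  case (step x z ys y)
  have zv: "z \<in> verts H" using adj_verts[OF step(1) step.prems(2)] by simp
  obtain es where es: "is_path H (z # ys) es" using step.IH step.prems zv by auto
  obtain e where e: "e \<in> edges H" "endpts H e = {x, z}" using step(1) unfolding adj_def by blast
  have "is_path H (x # z # ys) (e # es)"
    using es e step.prems unfolding is_path_def
    apply (intro conjI)
    apply simp_all
    apply (intro allI impI)
    subgoal for i by (cases i) auto
    done
  then show ?case by blast
qed

definition geo :: "('a \<Rightarrow> 'a \<Rightarrow> bool) \<Rightarrow> 'a list \<Rightarrow> bool" where
  "geo R vs \<longleftrightarrow> (\<forall>i j l. i < length vs \<longrightarrow> j < length vs \<longrightarrow> (R ^^ l) (vs ! i) (vs ! j) \<longrightarrow>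
      j \<le> i + l \<and> i \<le> j + l)"

lemma usp_geo:
  assumes usp: "is_usp H vs es" and ww: "ww H"
  shows "geo (adj H) vs"
proof -
  have P: "is_path H vs es" using usp unfolding is_usp_def by simp
  have ne: "vs \<noteq> []" and dv: "distinct vs" and sv: "set vs \<subseteq> verts H" using P unfolding is_path_def by auto
  have minl: "length vs \<le> length vs'" if "is_uv_path H (hd vs) (last vs) vs' es'" for vs' es'
    using usp that unfolding is_usp_def by blast
  have one: "j \<le> i + l" if ij: "i < length vs" "j < length vs" "(adj H ^^ l) (vs ! i) (vs ! j)" for i j l
  proof (rule ccontr)
    assume "\<not> j \<le> i + l"
    then have lt: "i + l < j" by simp
    define n where "n = length vs - 1"
    have jn: "j \<le> n" using ij unfolding n_def by simp
    have w1: "(adj H ^^ i) (vs ! 0) (vs ! i)" using path_walk[OF P, of 0 i] ij by simp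
    have w3: "(adj H ^^ (n - j)) (vs ! j) (vs ! n)" using path_walk[OF P, of j n] jn ij unfolding n_def by simp
    have W: "(adj H ^^ (i + l + (n - j))) (vs ! 0) (vs ! n)"
      using relpowp_trans[OF relpowp_trans[OF w1 ij(3)] w3] .
    obtain xs where xs: "rtrancl_path (adj H) (vs ! 0) xs (vs ! n)" "length xs = i + l + (n - j)"
      using relpow_path[OF W] by blast
    obtain xs' where xs': "rtrancl_path (adj H) (vs ! 0) xs' (vs ! n)" "distinct (vs ! 0 # xs')" "set xs' \<subseteq> set xs"
      using rtrancl_path_distinct[OF xs(1)] by blast
    have "length xs' \<le> length xs"
      using xs'(2,3) by (metis card_mono distinct.simps(2) distinct_card List.finite_set card_length order_trans)
    then have len: "length xs' < n" using xs(2) lt jn by simp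
    have v0: "vs ! 0 \<in> verts H" using sv ne by auto
    obtain es' where es': "is_path H (vs ! 0 # xs') es'" using path_to_is_path[OF xs'(1,2) ww v0] by blast
    have "last (vs ! 0 # xs') = vs ! n" using rtrancl_path_last[OF xs'(1)] .
    also have "\<dots> = last vs" using ne unfolding n_def by (simp add: last_conv_nth)
    finally have "is_uv_path H (hd vs) (last vs) (vs ! 0 # xs') es'"
      unfolding is_uv_path_def using es' ne by (simp add: hd_conv_nth)
    then have "length vs \<le> length (vs ! 0 # xs')" by (rule minl)
    then show False using len ne unfolding n_def by simp
  qed
  show ?thesis unfolding geo_def
  proof (intro allI impI conjI)
    fix i j l assume a: "i < length vs" "j < length vs" "(adj H ^^ l) (vs ! i) (vs ! j)"
    show "j \<le> i + l" using one[OF a] .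
    have "(adj H ^^ l) (vs ! j) (vs ! i)" using relpowp_sym[OF adj_sym a(3)] .
    then show "i \<le> j + l" using one[OF a(2) a(1)] by simp
  qed
qed

definition idx :: "'a list \<Rightarrow> 'a set \<Rightarrow> nat set" where
  "idx vs Q = {t. t < length vs \<and> vs ! t \<in> Q}"

lemma arith_helper: "b \<le> a + m \<Longrightarrow> a \<le> b + m \<Longrightarrow> 1 \<le> m \<Longrightarrow> max a b - Suc (min a b) + 1 \<le> (m::nat)"
  by (simp add: min_def max_def) arith

lemma interval_bound:
  assumes "b \<in> X"
  shows "card ({min a b..max a b} - X - {a}) \<le> max a b - Suc (min a b)"
proof -
  have "{min a b..max a b} - X - {a} \<subseteq> {min a b<..<max a b}" using assms by (auto simp: min_def max_def)
  then have "card ({min a b..max a b} - X - {a}) \<le> card {min a b<..<max a b}" by (rule card_mono[rotated]) simp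
  then show ?thesis by simp
qed

lemma split_interval:
  "t \<in> {min a b..max a b} \<Longrightarrow> t \<noteq> a \<Longrightarrow> t \<noteq> (c::nat) \<Longrightarrow> t \<in> {min a c<..<max a c} \<or> t \<in> {min c b..max c b}"
  by (auto simp: min_def max_def split: if_splits)

lemma count_aux:
  assumes "rtrancl_path R z ys y"
  shows "y = vs ! b \<Longrightarrow> b < length vs \<Longrightarrow> distinct (z # ys) \<Longrightarrow> distinct vs \<Longrightarrow> a < length vs \<Longrightarrow>
    (R ^^ m) (vs ! a) z \<Longrightarrow> 1 \<le> m \<Longrightarrow> geo R vs \<Longrightarrow>
    card ({min a b..max a b} - idx vs (set (z # ys)) - {a}) + 1 \<le> card (set (z # ys) - set vs) + m"
  using assms
proof (induction arbitrary: a m rule: rtrancl_path.induct)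
  case (base x)
  have g: "b \<le> a + m" "a \<le> b + m" using base.prems unfolding geo_def by blast+
  have "b \<in> idx vs (set [x])" unfolding idx_def using base.prems by simp
  then have "card ({min a b..max a b} - idx vs (set [x]) - {a}) \<le> max a b - Suc (min a b)"
    by (rule interval_bound)
  then show ?case using arith_helper[OF g base.prems(7)] by linarith
next
  case (step x z1 ys y)
  have d1: "distinct (z1 # ys)" using step.prems(3) by simp
  have xn: "x \<notin> set (z1 # ys)" using step.prems(3) by simp
  have fin: "finite (set (z1 # ys) - set vs)" by simp
  show ?case
  proof (cases "x \<in> set vs")
    case False
    have Rm: "(R ^^ Suc m) (vs ! a) z1" using step.prems(6) step.hyps(1) by (rule relpowp_Suc_I)
    have IH: "card ({min a b..max a b} - idx vs (set (z1 # ys)) - {a}) + 1 \<le> card (set (z1 # ys) - set vs) + Suc m"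
      using step.IH[OF step.prems(1,2) d1 step.prems(4,5) Rm _ step.prems(8)] by simp
    have i1: "idx vs (set (x # z1 # ys)) = idx vs (set (z1 # ys))"
      unfolding idx_def using False by (auto simp: nth_mem)
    have "set (x # z1 # ys) - set vs = insert x (set (z1 # ys) - set vs)" using False by auto
    then have c1: "card (set (x # z1 # ys) - set vs) = Suc (card (set (z1 # ys) - set vs))"
      using fin xn by simp
    show ?thesis using IH i1 c1 by simp
  next
    case True
    then obtain c where c: "c < length vs" "vs ! c = x" by (metis in_set_conv_nth)
    have g: "c \<le> a + m" "a \<le> c + m" using step.prems(5,6,8) c unfolding geo_def by metis+
    have R1: "(R ^^ 1) (vs ! c) z1" unfolding relpowp_1 using step.hyps(1) c(2) by simp
    have IH: "card ({min c b..max c b} - idx vs (set (z1 # ys)) - {c}) + 1 \<le> card (set (z1 # ys) - set vs) + 1"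
      using step.IH[OF step.prems(1,2) d1 step.prems(4) c(1) R1 _ step.prems(8)] by simp
    have s1: "set (x # z1 # ys) - set vs = set (z1 # ys) - set vs" using True by auto
    have i1: "c \<in> idx vs (set (x # z1 # ys))" "idx vs (set (z1 # ys)) \<subseteq> idx vs (set (x # z1 # ys))"
      unfolding idx_def using c by auto
    let ?A = "{min a b..max a b} - idx vs (set (x # z1 # ys)) - {a}"
    let ?B = "{min c b..max c b} - idx vs (set (z1 # ys)) - {c}"
    have sub: "?A \<subseteq> {min a c<..<max a c} \<union> ?B"
    proof
      fix t assume t: "t \<in> ?A"
      then have t1: "t \<in> {min a b..max a b}" "t \<noteq> a" "t \<noteq> c" "t \<notin> idx vs (set (z1 # ys))"
        using i1 by auto
      show "t \<in> {min a c<..<max a c} \<union> ?B" using split_interval[OF t1(1-3)] t1 by blast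
    qed
    have "card ?A \<le> card ({min a c<..<max a c} \<union> ?B)" using sub by (rule card_mono[rotated]) simp
    also have "\<dots> \<le> card {min a c<..<max a c} + card ?B" by (rule card_Un_le)
    finally have cA: "card ?A \<le> (max a c - Suc (min a c)) + card ?B" by simp
    have "max a c - Suc (min a c) + 1 \<le> m" using arith_helper[of c a m] g step.prems(7) by simp
    then show ?thesis using cA IH s1 by simp
  qed
qed

lemma count_main:
  assumes "rtrancl_path R (vs ! a) ys (vs ! b)" "distinct (vs ! a # ys)" "distinct vs"
    "a < length vs" "b < length vs" "geo R vs"
  shows "card ({min a b..max a b} - idx vs (set (vs ! a # ys))) \<le> card (set (vs ! a # ys) - set vs)"
proof (cases ys)
  case Nil
  then have "vs ! a = vs ! b" using assms(1) by (auto elim: rtrancl_path.cases)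
  then have ab: "a = b" using assms(3,4,5) by (simp add: nth_eq_iff_index_eq)
  have "a \<in> idx vs (set (vs ! a # ys))" unfolding idx_def using assms(4) by simp
  then have e: "{min a b..max a b} - idx vs (set (vs ! a # ys)) = {}" using ab by auto
  show ?thesis unfolding e by simp
next
  case (Cons z1 ys')
  have st: "R (vs ! a) z1 \<and> rtrancl_path R z1 ys' (vs ! b)"
    using assms(1) unfolding Cons by (auto elim: rtrancl_path.cases)
  have R1: "(R ^^ 1) (vs ! a) z1" unfolding relpowp_1 using st by simp
  have d1: "distinct (z1 # ys')" using assms(2) Cons by simp
  have A: "card ({min a b..max a b} - idx vs (set (z1 # ys')) - {a}) + 1 \<le> card (set (z1 # ys') - set vs) + 1"
    using count_aux[OF conjunct2[OF st] refl assms(5) d1 assms(3,4) R1 _ assms(6)] by simp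
  have s1: "set (vs ! a # ys) - set vs = set (z1 # ys') - set vs" using Cons assms(4) by auto
  have "{min a b..max a b} - idx vs (set (vs ! a # ys)) \<subseteq> {min a b..max a b} - idx vs (set (z1 # ys')) - {a}"
    unfolding idx_def Cons using assms(4) by auto
  then have "card ({min a b..max a b} - idx vs (set (vs ! a # ys))) \<le> card ({min a b..max a b} - idx vs (set (z1 # ys')) - {a})"
    by (rule card_mono[rotated]) simp
  then show ?thesis using A s1 by simp
qed

lemma lower:
  assumes wf: "wf_graph H" and M: "model H m B0 L" and U: "is_usp H vs es"
  shows "length vs + m \<le> card (verts H) + 2"
proof -
  have ww: "ww H" by (rule wf_ww[OF wf])
  have finV: "finite (verts H)" using wf unfolding wf_graph_def by simp
  have P: "is_path H vs es" using U unfolding is_usp_def by simp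
  have dv: "distinct vs" "set vs \<subseteq> verts H" "vs \<noteq> []" using P unfolding is_path_def by auto
  have geo: "geo (adj H) vs" by (rule usp_geo[OF U ww])
  have B0: "B0 \<subseteq> verts H" using M unfolding model_def by blast
  have finB: "finite B0" using finite_subset[OF B0 finV] .
  have Li: "L i \<subseteq> verts H \<and> L i \<inter> B0 = {} \<and> (\<exists>x\<in>L i. \<exists>y\<in>B0. adj H x y)" if "i \<in> {1..m}" for i
    using M that unfolding model_def by blast
  have Ld: "L i \<inter> L j = {}" if "i \<in> {1..m}" "j \<in> {1..m}" "i \<noteq> j" for i j
    using M that unfolding model_def by blast
  have Bc: "conn H B0 a b" if "a \<in> B0" "b \<in> B0" for a b
    using M that unfolding model_def by blast
  define Lin where "Lin = {i \<in> {1..m}. L i \<subseteq> set vs}"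
  define Lout where "Lout = {1..m} - Lin"
  define oo where "oo i = (SOME x. x \<in> L i - set vs)" for i
  have oo: "oo i \<in> L i - set vs" if "i \<in> Lout" for i
  proof -
    have "\<exists>x. x \<in> L i - set vs" using that unfolding Lout_def Lin_def by auto
    then show ?thesis unfolding oo_def by (rule someI_ex)
  qed
  have Lout1: "Lout \<subseteq> {1..m}" unfolding Lout_def by blast
  have oinj: "inj_on oo Lout"
  proof (rule inj_onI)
    fix i j assume ij: "i \<in> Lout" "j \<in> Lout" "oo i = oo j"
    show "i = j"
    proof (rule ccontr)
      assume "i \<noteq> j"
      then have "L i \<inter> L j = {}" using Ld ij(1,2) Lout1 by blast
      moreover have "oo i \<in> L i" "oo i \<in> L j" using oo[OF ij(1)] oo[OF ij(2)] ij(3) by auto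
      ultimately show False by blast
    qed
  qed
  have osub: "oo ` Lout \<subseteq> verts H - set vs"
  proof
    fix x assume "x \<in> oo ` Lout"
    then obtain i where i: "i \<in> Lout" "x = oo i" by blast
    then show "x \<in> verts H - set vs" using oo[OF i(1)] Li[of i] Lout1 by blast
  qed
  have odis: "oo ` Lout \<inter> (B0 - set vs) = {}"
  proof (rule ccontr)
    assume "oo ` Lout \<inter> (B0 - set vs) \<noteq> {}"
    then obtain i where i: "i \<in> Lout" "oo i \<in> B0" by blast
    then show False using oo[OF i(1)] Li[of i] Lout1 by blast
  qed
  have finLout: "finite Lout" using Lout1 finite_subset by blast
  have "card (oo ` Lout) + card (B0 - set vs) = card (oo ` Lout \<union> (B0 - set vs))"
    using odis finLout finB by (simp add: card_Un_disjoint)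
  also have "\<dots> \<le> card (verts H - set vs)"
    using osub B0 finV by (intro card_mono) auto
  also have "\<dots> = card (verts H) - length vs"
    using dv finV by (simp add: card_Diff_subset distinct_card)
  finally have c1: "card Lout + card (B0 - set vs) \<le> card (verts H) - length vs"
    using card_image[OF oinj] by simp
  have lenV: "length vs \<le> card (verts H)"
    using dv finV by (metis card_mono distinct_card)
  have Lin1: "Lin \<subseteq> {1..m}" unfolding Lin_def by blast
  have finLin: "finite Lin" using Lin1 finite_subset by blast
  have cm: "card Lin + card Lout = m"
  proof -
    have "card Lout = card {1..m} - card Lin" unfolding Lout_def using Lin1 finLin by (simp add: card_Diff_subset)
    moreover have "card Lin \<le> card {1..m}" using Lin1 by (intro card_mono) auto
    ultimately show ?thesis by simp
  qed
  have claim: "card Lin \<le> card (B0 - set vs) + 2"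
  proof -
    define v where "v i = (SOME x. x \<in> L i \<and> (\<exists>y\<in>B0. adj H x y))" for i
    have v: "v i \<in> L i \<and> (\<exists>y\<in>B0. adj H (v i) y)" if "i \<in> Lin" for i
    proof -
      have "\<exists>x. x \<in> L i \<and> (\<exists>y\<in>B0. adj H x y)" using Li[of i] that Lin1 by blast
      then show ?thesis unfolding v_def by (rule someI_ex)
    qed
    have vP: "v i \<in> set vs" if "i \<in> Lin" for i using v[OF that] that unfolding Lin_def by blast
    define t where "t i = (SOME s. s < length vs \<and> vs ! s = v i)" for i
    have t: "t i < length vs \<and> vs ! (t i) = v i" if "i \<in> Lin" for i
    proof -
      have "\<exists>s. s < length vs \<and> vs ! s = v i" using vP[OF that] by (simp add: in_set_conv_nth)
      then show ?thesis unfolding t_def by (rule someI_ex)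
    qed
    have tinj: "inj_on t Lin"
    proof (rule inj_onI)
      fix i j assume ij: "i \<in> Lin" "j \<in> Lin" "t i = t j"
      show "i = j"
      proof (rule ccontr)
        assume "i \<noteq> j"
        then have dj: "L i \<inter> L j = {}" using Ld ij(1,2) Lin1 by blast
        have vij: "v i = v j" using t[OF ij(1)] t[OF ij(2)] ij(3) by metis
        have vi: "v i \<in> L i" by (rule conjunct1[OF v[OF ij(1)]])
        have vj: "v j \<in> L j" by (rule conjunct1[OF v[OF ij(2)]])
        have "v i \<in> L i \<inter> L j" using vi vj vij by simp
        then show False using dj by simp
      qed
    qed
    define J where "J = t ` Lin"
    have cJ: "card J = card Lin" unfolding J_def by (rule card_image[OF tinj])
    have finJ: "finite J" unfolding J_def using finLin by simp
    show ?thesis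
    proof (cases "Lin = {}")
      case True then show ?thesis by simp
    next
      case False
      then have Jne: "J \<noteq> {}" unfolding J_def by simp
      define lo where "lo = Min J"
      define hi where "hi = Max J"
      have "lo \<in> J" unfolding lo_def using finJ Jne by simp
      then obtain i1 where i1: "i1 \<in> Lin" "lo = t i1" unfolding J_def by blast
      have "hi \<in> J" unfolding hi_def using finJ Jne by simp
      then obtain i2 where i2: "i2 \<in> Lin" "hi = t i2" unfolding J_def by blast
      have lohi: "lo \<le> hi" unfolding lo_def hi_def using finJ Jne by simp
      have lo_lt: "lo < length vs" and a_eq: "vs ! lo = v i1" using t[OF i1(1)] i1(2) by auto
      have hi_lt: "hi < length vs" and b_eq: "vs ! hi = v i2" using t[OF i2(1)] i2(2) by auto
      obtain y1 where y1: "y1 \<in> B0" "adj H (vs ! lo) y1" using v[OF i1(1)] a_eq by auto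
      obtain y2 where y2: "y2 \<in> B0" "adj H (vs ! hi) y2" using v[OF i2(1)] b_eq by auto
      define S where "S = B0 \<union> {vs ! lo, vs ! hi}"
      define R' where "R' = (\<lambda>x y. x \<in> S \<and> y \<in> S \<and> adj H x y)"
      have r1: "R' (vs ! lo) y1" unfolding R'_def S_def using y1 by simp
      have r3: "R' y2 (vs ! hi)" unfolding R'_def S_def using y2 adj_sym[OF y2(2)] by simp
      have "conn H S y1 y2" using Bc[OF y1(1) y2(1)] by (rule conn_mono) (auto simp: S_def)
      then have r2: "R'\<^sup>*\<^sup>* y1 y2" unfolding conn_def R'_def .
      have "R'\<^sup>*\<^sup>* (vs ! lo) (vs ! hi)"
        using converse_rtranclp_into_rtranclp[OF r1 rtranclp.rtrancl_into_rtrancl[OF r2 r3]] .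
      then obtain xs where xs: "rtrancl_path R' (vs ! lo) xs (vs ! hi)"
        unfolding rtranclp_eq_rtrancl_path by blast
      obtain xs' where xs': "rtrancl_path R' (vs ! lo) xs' (vs ! hi)" "distinct (vs ! lo # xs')"
        using rtrancl_path_distinct[OF xs] by blast
      have setS: "set xs' \<subseteq> S" using rtrancl_path_set[OF xs'(1)] unfolding R'_def by blast
      have rp: "rtrancl_path (adj H) (vs ! lo) xs' (vs ! hi)"
        using rtrancl_path_mono[OF xs'(1)] unfolding R'_def by blast
      have cnt: "card ({min lo hi..max lo hi} - idx vs (set (vs ! lo # xs'))) \<le> card (set (vs ! lo # xs') - set vs)"
        by (rule count_main[OF rp xs'(2) dv(1) lo_lt hi_lt geo])
      have "set (vs ! lo # xs') - set vs \<subseteq> B0 - set vs"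
        using setS lo_lt hi_lt unfolding S_def by (auto simp: nth_mem)
      then have c2: "card (set (vs ! lo # xs') - set vs) \<le> card (B0 - set vs)"
        using finB by (intro card_mono) auto
      have Jsub: "J - {lo, hi} \<subseteq> {lo..hi} - idx vs (set (vs ! lo # xs'))"
      proof
        fix s assume s: "s \<in> J - {lo, hi}"
        then obtain i where i: "i \<in> Lin" "s = t i" unfolding J_def by blast
        have sJ: "s \<in> J" using s by blast
        have r: "lo \<le> s" "s \<le> hi" unfolding lo_def hi_def using finJ sJ by auto
        have sl: "s < length vs" "vs ! s = v i" using t[OF i(1)] unfolding i(2) by simp_all
        have i1m: "i \<in> {1..m}" using i(1) Lin1 by blast
        have vi: "v i \<in> L i" by (rule conjunct1[OF v[OF i(1)]])
        have dis: "L i \<inter> B0 = {}" using Li[OF i1m] by simp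
        have "vs ! s \<in> L i" using vi sl(2) by simp
        then have nB: "vs ! s \<notin> B0" using dis by blast
        have na: "vs ! s \<noteq> vs ! lo" using s sl(1) lo_lt dv(1) by (auto simp: nth_eq_iff_index_eq)
        have nb: "vs ! s \<noteq> vs ! hi" using s sl(1) hi_lt dv(1) by (auto simp: nth_eq_iff_index_eq)
        have "vs ! s \<notin> set (vs ! lo # xs')" using setS nB na nb unfolding S_def by auto
        then have "s \<notin> idx vs (set (vs ! lo # xs'))" unfolding idx_def by simp
        then show "s \<in> {lo..hi} - idx vs (set (vs ! lo # xs'))" using r by simp
      qed
      have "card (J - {lo, hi}) \<le> card ({lo..hi} - idx vs (set (vs ! lo # xs')))"
        using Jsub by (intro card_mono) auto
      also have "\<dots> \<le> card (B0 - set vs)" using cnt c2 lohi by (simp add: min_def max_def)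
      finally have c3: "card (J - {lo, hi}) \<le> card (B0 - set vs)" .
      have "card J - card {lo, hi} \<le> card (J - {lo, hi})" by (rule diff_card_le_card_Diff) simp
      moreover have "card {lo, hi} \<le> 2" by (simp add: card_insert_if)
      ultimately show ?thesis using c3 cJ by linarith
    qed
  qed
  show ?thesis using c1 cm claim lenV by linarith
qed

lemma dbl: "{x, y} = {x, z} \<Longrightarrow> y = (z::nat)"
  by (metis doubleton_eq_iff)

lemma uv_basic:
  assumes "is_uv_path H a d vs es"
  shows "vs \<noteq> []" "distinct vs" "vs ! 0 = a" "last vs = d" "set es \<subseteq> edges H"
    "length es + 1 = length vs" "\<And>i. i < length es \<Longrightarrow> endpts H (es ! i) = {vs ! i, vs ! Suc i}"
  using assms unfolding is_uv_path_def is_path_def by (auto simp: hd_conv_nth)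

lemma len4: "length xs = 4 \<Longrightarrow> xs = [xs ! 0, xs ! 1, xs ! 2, xs ! 3]"
  by (rule nth_equalityI) (auto simp: less_Suc_eq numeral_eq_Suc)

lemma len3: "length xs = 3 \<Longrightarrow> xs = [xs ! 0, xs ! 1, xs ! 2]"
  by (rule nth_equalityI) (auto simp: less_Suc_eq numeral_eq_Suc)

lemma len2: "length xs = 2 \<Longrightarrow> xs = [xs ! 0, xs ! 1]"
  by (rule nth_equalityI) (auto simp: less_Suc_eq numeral_eq_Suc)

lemma usp4:
  assumes p: "is_path H [a,b,c,d] [e1,e2,e3]"
   and ha: "\<forall>f\<in>edges H. a \<in> endpts H f \<longrightarrow> f = e1"
   and hb: "\<forall>f\<in>edges H. b \<in> endpts H f \<longrightarrow> f = e1 \<or> f = e2"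
   and hd: "\<forall>f\<in>edges H. d \<in> endpts H f \<longrightarrow> f = e3"
  shows "is_usp H [a,b,c,d] [e1,e2,e3]"
proof -
  have pd: "distinct [a,b,c,d]" using p unfolding is_path_def by simp
  have ep: "endpts H e1 = {a,b}" "endpts H e2 = {b,c}" "endpts H e3 = {c,d}"
    using p unfolding is_path_def by (auto simp: less_Suc_eq numeral_eq_Suc)
  have main: "4 \<le> length vs' \<and> (length vs' = 4 \<longrightarrow> vs' = [a,b,c,d] \<and> es' = [e1,e2,e3])"
    if u: "is_uv_path H a d vs' es'" for vs' es'
  proof -
    note B = uv_basic[OF u]
    have n2: "2 \<le> length vs'"
    proof (rule ccontr)
      assume "\<not> 2 \<le> length vs'"
      moreover have "length vs' \<noteq> 0" using B(1) by simp
      ultimately have "length vs' = 1" by linarith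
      then have "last vs' = vs' ! 0" using B(1) by (simp add: last_conv_nth)
      then show False using B(3,4) pd by simp
    qed
    have lj0: "0 < length es'" using B(6) n2 by linarith
    have e0: "es' ! 0 \<in> edges H" "endpts H (es' ! 0) = {a, vs' ! 1}"
      using B(5) nth_mem[OF lj0] B(7)[OF lj0] B(3) by auto
    have "es' ! 0 = e1" using ha e0 by auto
    then have v1: "vs' ! 1 = b" using e0 ep dbl by metis
    have n3: "3 \<le> length vs'"
    proof (rule ccontr)
      assume "\<not> 3 \<le> length vs'"
      then have "length vs' = 2" using n2 by simp
      then have "last vs' = vs' ! 1" using B(1) by (simp add: last_conv_nth)
      then show False using B(4) v1 pd by simp
    qed
    have lj1: "1 < length es'" using B(6) n3 v1 by linarith
    have e1': "es' ! 1 \<in> edges H" "endpts H (es' ! 1) = {b, vs' ! 2}"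
      using B(5) nth_mem[OF lj1] B(7)[OF lj1] n3 v1 by (auto simp: numeral_eq_Suc)
    have "es' ! 1 = e1 \<or> es' ! 1 = e2" using hb e1' by auto
    moreover have "es' ! 1 \<noteq> e1"
    proof
      assume "es' ! 1 = e1"
      then have "{b, vs' ! 2} = {b, a}" using e1' ep by (simp add: insert_commute)
      then have "vs' ! 2 = vs' ! 0" using dbl B(3) by metis
      moreover have "vs' ! 2 = vs' ! 0 \<longleftrightarrow> (2::nat) = 0"
        using nth_eq_iff_index_eq[OF B(2), of 2 0] n3 B(1) by simp
      ultimately show False by simp
    qed
    ultimately have "es' ! 1 = e2" by blast
    then have v2: "vs' ! 2 = c" using e1' ep dbl by metis
    have n4: "4 \<le> length vs'"
    proof (rule ccontr)
      assume "\<not> 4 \<le> length vs'"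
      then have "length vs' = 3" using n3 by simp
      then have "last vs' = vs' ! 2" using B(1) by (simp add: last_conv_nth)
      then show False using B(4) v2 pd by simp
    qed
    have eq: "vs' = [a,b,c,d] \<and> es' = [e1,e2,e3]" if l4: "length vs' = 4"
    proof -
      have v3: "vs' ! 3 = d" using B(1,4) l4 by (simp add: last_conv_nth)
      have lj2: "2 < length es'" using B(6) l4 v2 v3 by linarith
      have e2': "es' ! 2 \<in> edges H" "endpts H (es' ! 2) = {c, d}"
        using B(5) nth_mem[OF lj2] B(7)[OF lj2] l4 v2 v3 by (auto simp: numeral_eq_Suc)
      have "es' ! 2 = e3" using hd e2' by auto
      have les: "length es' = 3" using B(6) l4 by simp
      have "vs' = [a,b,c,d]" using len4[OF l4] B(3) v1 v2 v3 by simp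
      moreover have "es' = [e1,e2,e3]" using len3[OF les] \<open>es' ! 0 = e1\<close> \<open>es' ! 1 = e2\<close> \<open>es' ! 2 = e3\<close> by simp
      ultimately show ?thesis by simp
    qed
    show ?thesis using n4 eq by blast
  qed
  show ?thesis unfolding is_usp_def using p main by (auto simp: numeral_eq_Suc)
qed

lemma usp3:
  assumes p: "is_path H [a,b,c] [e1,e2]"
   and ha: "\<forall>f\<in>edges H. a \<in> endpts H f \<longrightarrow> f = e1"
   and hc: "\<forall>f\<in>edges H. c \<in> endpts H f \<longrightarrow> f = e2"
  shows "is_usp H [a,b,c] [e1,e2]"
proof -
  have pd: "distinct [a,b,c]" using p unfolding is_path_def by simp
  have ep: "endpts H e1 = {a,b}" "endpts H e2 = {b,c}"
    using p unfolding is_path_def by (auto simp: less_Suc_eq numeral_eq_Suc)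
  have main: "3 \<le> length vs' \<and> (length vs' = 3 \<longrightarrow> vs' = [a,b,c] \<and> es' = [e1,e2])"
    if u: "is_uv_path H a c vs' es'" for vs' es'
  proof -
    note B = uv_basic[OF u]
    have n2: "2 \<le> length vs'"
    proof (rule ccontr)
      assume "\<not> 2 \<le> length vs'"
      moreover have "length vs' \<noteq> 0" using B(1) by simp
      ultimately have "length vs' = 1" by linarith
      then have "last vs' = vs' ! 0" using B(1) by (simp add: last_conv_nth)
      then show False using B(3,4) pd by simp
    qed
    have lj0: "0 < length es'" using B(6) n2 by linarith
    have e0: "es' ! 0 \<in> edges H" "endpts H (es' ! 0) = {a, vs' ! 1}"
      using B(5) nth_mem[OF lj0] B(7)[OF lj0] B(3) by auto
    have "es' ! 0 = e1" using ha e0 by auto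
    then have v1: "vs' ! 1 = b" using e0 ep dbl by metis
    have n3: "3 \<le> length vs'"
    proof (rule ccontr)
      assume "\<not> 3 \<le> length vs'"
      then have "length vs' = 2" using n2 by simp
      then have "last vs' = vs' ! 1" using B(1) by (simp add: last_conv_nth)
      then show False using B(4) v1 pd by simp
    qed
    have eq: "vs' = [a,b,c] \<and> es' = [e1,e2]" if l3: "length vs' = 3"
    proof -
      have v2: "vs' ! 2 = c" using B(1,4) l3 by (simp add: last_conv_nth)
      have lj1: "1 < length es'" using B(6) l3 v1 v2 by linarith
      have e1': "es' ! 1 \<in> edges H" "endpts H (es' ! 1) = {b, c}"
        using B(5) nth_mem[OF lj1] B(7)[OF lj1] l3 v1 v2 by (auto simp: numeral_eq_Suc)
      have "es' ! 1 = e2" using hc e1' by auto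
      have les: "length es' = 2" using B(6) l3 by simp
      have "vs' = [a,b,c]" using len3[OF l3] B(3) v1 v2 by simp
      moreover have "es' = [e1,e2]" using len2[OF les] \<open>es' ! 0 = e1\<close> \<open>es' ! 1 = e2\<close> by simp
      ultimately show ?thesis by simp
    qed
    show ?thesis using n3 eq by blast
  qed
  show ?thesis unfolding is_usp_def using p main by (auto simp: numeral_eq_Suc)
qed

lemma usp1:
  assumes "x \<in> verts H"
  shows "is_usp H [x] []"
proof -
  have p: "is_path H [x] []" unfolding is_path_def using assms by simp
  have "1 \<le> length vs' \<and> (length vs' = 1 \<longrightarrow> vs' = [x] \<and> es' = [])"
    if u: "is_uv_path H x x vs' es'" for vs' es'
  proof -
    note B = uv_basic[OF u]
    have "1 \<le> length vs'" using B(1) by (cases vs') auto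
    moreover have "vs' = [x] \<and> es' = []" if "length vs' = 1"
      using that B(3,6) by (cases vs') auto
    ultimately show ?thesis by blast
  qed
  then show ?thesis unfolding is_usp_def using p by auto
qed

lemma usp_set_finite:
  assumes "finite (verts H)"
  shows "finite {length vs | vs es. is_usp H vs es}"
proof -
  have "{length vs | vs es. is_usp H vs es} \<subseteq> {..card (verts H)}"
  proof
    fix n assume "n \<in> {length vs | vs es. is_usp H vs es}"
    then obtain vs es where n: "n = length vs" "is_usp H vs es" by blast
    then have "distinct vs" "set vs \<subseteq> verts H" unfolding is_usp_def is_path_def by auto
    then have "length vs \<le> card (verts H)" using assms by (metis card_mono distinct_card)
    then show "n \<in> {..card (verts H)}" using n by simp
  qed
  then show ?thesis using finite_subset by blast
qed

lemma usp_ge: "finite (verts H) \<Longrightarrow> is_usp H vs es \<Longrightarrow> length vs \<le> usp H"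
  unfolding usp_def by (rule Max_ge[OF usp_set_finite]) auto

lemma usp_le:
  assumes "finite (verts H)" "verts H \<noteq> {}" "\<And>vs es. is_usp H vs es \<Longrightarrow> length vs \<le> N"
  shows "usp H \<le> N"
proof -
  obtain x where "x \<in> verts H" using assms(2) by blast
  then have "is_usp H [x] []" by (rule usp1)
  then have ne: "{length vs | vs es. is_usp H vs es} \<noteq> {}" by blast
  show ?thesis unfolding usp_def using assms(3)
    by (subst Max_le_iff[OF usp_set_finite[OF assms(1)] ne]) blast
qed

definition spA :: "nat \<Rightarrow> nat \<Rightarrow> nat \<Rightarrow> mgraph" where
  "spA k e e' = \<lparr>verts = {0..k+2}, edges = {1..k+2}, endpts = (\<lambda>f. if f = e then {e, e'} else {0, f})\<rparr>"

definition spB :: "nat \<Rightarrow> nat \<Rightarrow> nat \<Rightarrow> mgraph" where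
  "spB k e e' = \<lparr>verts = {0..k+2}, edges = {1..k+2}, endpts = (\<lambda>f. if f = e then {0, e'} else {e, f})\<rparr>"

lemma spA_wf:
  assumes "e \<in> {1..k+2}" "e' \<in> {1..k+2}" "e' \<noteq> e"
  shows "wf_graph (spA k e e')"
  unfolding wf_graph_def spA_def using assms by auto

lemma spB_wf:
  assumes "e \<in> {1..k+2}" "e' \<in> {1..k+2}" "e' \<noteq> e"
  shows "wf_graph (spB k e e')"
  unfolding wf_graph_def spB_def using assms by auto

lemma sp_lt:
  assumes "wf_graph H" "card (verts H) = k + 3" "is_usp H vs es" "length vs = 4" "1 \<le> k"
  shows "sp H < k"
proof -
  have "finite (verts H)" using assms(1) unfolding wf_graph_def by simp
  then have "4 \<le> usp H" using usp_ge[OF _ assms(3)] assms(4) by simp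
  then show ?thesis unfolding sp_def using assms(2,5) by simp
qed

lemma spA_sp:
  assumes "e \<in> {1..k+2}" "e' \<in> {1..k+2}" "x \<in> {1..k+2}" "e' \<noteq> e" "x \<noteq> e" "x \<noteq> e'" "1 \<le> k"
  shows "sp (spA k e e') < k"
proof -
  let ?H = "spA k e e'"
  have p: "is_path ?H [e, e', 0, x] [e, e', x]"
    unfolding is_path_def spA_def using assms
    by (auto simp: less_Suc_eq numeral_eq_Suc insert_commute)
  have u: "is_usp ?H [e, e', 0, x] [e, e', x]"
    by (rule usp4[OF p]) (use assms in \<open>auto simp: spA_def\<close>)
  have c: "card (verts ?H) = k + 3" unfolding spA_def by simp
  show ?thesis by (rule sp_lt[OF spA_wf[OF assms(1,2,4)] c u _ assms(7)]) simp
qed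

lemma spB_sp:
  assumes "e \<in> {1..k+2}" "e' \<in> {1..k+2}" "x \<in> {1..k+2}" "e' \<noteq> e" "x \<noteq> e" "x \<noteq> e'" "1 \<le> k"
  shows "sp (spB k e e') < k"
proof -
  let ?H = "spB k e e'"
  have p: "is_path ?H [0, e', e, x] [e, e', x]"
    unfolding is_path_def spB_def using assms
    by (auto simp: less_Suc_eq numeral_eq_Suc insert_commute)
  have u: "is_usp ?H [0, e', e, x] [e, e', x]"
    by (rule usp4[OF p]) (use assms in \<open>auto simp: spB_def\<close>)
  have c: "card (verts ?H) = k + 3" unfolding spB_def by simp
  show ?thesis by (rule sp_lt[OF spB_wf[OF assms(1,2,4)] c u _ assms(7)]) simp
qed

lemma choose3:
  assumes "e \<in> {1..k+2}" "1 \<le> (k::nat)"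
  shows "\<exists>e' x. e' \<in> {1..k+2} \<and> x \<in> {1..k+2} \<and> e' \<noteq> e \<and> x \<noteq> e \<and> x \<noteq> e'"
  using assms
  by (intro exI[of _ "if e = 1 then 2 else 1"] exI[of _ "if e = 3 then 2 else 3"]) auto

lemma iso_refl: "graph_iso G G"
  unfolding graph_iso_def by (intro exI[of _ id]) (auto simp: bij_betw_def)

lemma sp_floor_le:
  assumes "wf_graph H" "is_minor G H"
  shows "sp_floor G \<le> sp H"
  unfolding sp_floor_def by (rule Least_le) (use assms in blast)

lemma minor_via:
  assumes "minor_step\<^sup>*\<^sup>* H A" "eqv G1 A" "minor_step\<^sup>*\<^sup>* G1 G'" "graph_iso G' G"
  shows "is_minor G H"
proof -
  obtain B2 where B2: "minor_step\<^sup>*\<^sup>* A B2" "eqv G' B2" using eqv_steps[OF assms(3,2)] by blast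
  have "graph_iso B2 G" using eqv_iso[OF B2(2) assms(4)] .
  then show ?thesis unfolding is_minor_def using rtranclp_trans[OF assms(1) B2(1)] by blast
qed

lemma first_step:
  assumes st: "minor_step (star (k+2)) G1" and k: "1 \<le> k"
  shows "\<exists>H A. wf_graph H \<and> sp H < k \<and> minor_step\<^sup>*\<^sup>* H A \<and> eqv G1 A"
  using st
proof (cases rule: minor_step.cases)
  case (del_vertex v)
  then have v: "v \<in> {0..k+2}" "\<forall>e\<in>{1..k+2}. v \<notin> {0, e}" unfolding star_def by auto
  show ?thesis
  proof (cases "v = 0")
    case True then show ?thesis using v(2) by auto
  next
    case False then show ?thesis using v by auto
  qed
next
  case (del_edge e)
  have e: "e \<in> {1..k+2}" using del_edge unfolding star_def by simp
  obtain e' x where ex: "e' \<in> {1..k+2}" "x \<in> {1..k+2}" "e' \<noteq> e" "x \<noteq> e" "x \<noteq> e'"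
    using choose3[OF e k] by blast
  let ?H = "spA k e e'"
  let ?A = "?H\<lparr>edges := edges ?H - {e}\<rparr>"
  have s1: "minor_step ?H ?A" by (rule minor_step.del_edge) (use e in \<open>simp add: spA_def\<close>)
  have eq: "eqv G1 ?A" unfolding del_edge eqv_def star_def spA_def by auto
  show ?thesis using spA_wf[OF e ex(1,3)] spA_sp[OF e ex k] s1 eq by blast
next
  case (contract e u w)
  have e: "e \<in> {1..k+2}" using contract unfolding star_def by simp
  have uw: "{0, e} = {u, w}" using contract unfolding star_def by simp
  obtain e' x where ex: "e' \<in> {1..k+2}" "x \<in> {1..k+2}" "e' \<noteq> e" "x \<noteq> e" "x \<noteq> e'"
    using choose3[OF e k] by blast
  have "(u = 0 \<and> w = e) \<or> (u = e \<and> w = 0)" using uw by (metis doubleton_eq_iff)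
  then show ?thesis
  proof
    assume a: "u = 0 \<and> w = e"
    let ?H = "spA k e e'"
    let ?A = "?H\<lparr>edges := edges ?H - {e}\<rparr>"
    let ?B = "?A\<lparr>verts := verts ?A - {e}\<rparr>"
    have s1: "minor_step ?H ?A" by (rule minor_step.del_edge) (use e in \<open>simp add: spA_def\<close>)
    have s2: "minor_step ?A ?B" by (rule minor_step.del_vertex) (use e in \<open>auto simp: spA_def\<close>)
    have eq: "eqv G1 ?B" unfolding contract(1) eqv_def star_def spA_def using a e by auto
    have "minor_step\<^sup>*\<^sup>* ?H ?B" using s1 s2 by auto
    then show ?thesis using spA_wf[OF e ex(1,3)] spA_sp[OF e ex k] eq by blast
  next
    assume a: "u = e \<and> w = 0"
    let ?H = "spB k e e'"
    let ?A = "?H\<lparr>edges := edges ?H - {e}\<rparr>"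
    let ?B = "?A\<lparr>verts := verts ?A - {0}\<rparr>"
    have s1: "minor_step ?H ?A" by (rule minor_step.del_edge) (use e in \<open>simp add: spB_def\<close>)
    have s2: "minor_step ?A ?B" by (rule minor_step.del_vertex) (use e in \<open>auto simp: spB_def\<close>)
    have eq: "eqv G1 ?B" unfolding contract(1) eqv_def star_def spB_def using a e by auto
    have "minor_step\<^sup>*\<^sup>* ?H ?B" using s1 s2 by auto
    then show ?thesis using spB_wf[OF e ex(1,3)] spB_sp[OF e ex k] eq by blast
  qed
qed

theorem corollary4p5:
  fixes k :: nat
  assumes "k \<ge> 1"
  shows "sp_floor (star (k + 2)) = k \<and>
    (\<forall>G. wf_graph G \<and> is_minor G (star (k + 2)) \<and> \<not> graph_iso G (star (k + 2))
       \<longrightarrow> sp_floor G \<noteq> k)"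
proof -
  let ?S = "star (k + 2)"
  have wfS: "wf_graph ?S" unfolding wf_graph_def star_def by auto
  have lowb: "k \<le> sp H" if H: "wf_graph H" "is_minor ?S H" for H
  proof -
    have ww: "ww H" by (rule wf_ww[OF H(1)])
    obtain B0 L where M: "model H (k+2) B0 L" using minor_model[OF H(2) ww] unfolding has_model_def by blast
    have fin: "finite (verts H)" "verts H \<noteq> {}" using H(1) unfolding wf_graph_def by auto
    have bnd: "length vs \<le> card (verts H) - k" if "is_usp H vs es" for vs es
      using lower[OF H(1) M that] by linarith
    have u: "usp H \<le> card (verts H) - k" by (rule usp_le[OF fin bnd])
    obtain x where "x \<in> verts H" using fin(2) by blast
    then have "is_usp H [x] []" by (rule usp1)
    then have "k \<le> card (verts H)" using lower[OF H(1) M] by fastforce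
    then show ?thesis unfolding sp_def using u by linarith
  qed
  have isS: "is_minor ?S ?S" unfolding is_minor_def using iso_refl by blast
  have spS: "sp ?S = k"
  proof -
    have p: "is_path ?S [1, 0, 2] [1, 2]"
      unfolding is_path_def star_def by (auto simp: less_Suc_eq numeral_eq_Suc insert_commute)
    have u: "is_usp ?S [1, 0, 2] [1, 2]"
      by (rule usp3[OF p]) (auto simp: star_def)
    have "3 \<le> usp ?S" using usp_ge[OF _ u] unfolding star_def by simp
    moreover have "card (verts ?S) = k + 3" unfolding star_def by simp
    ultimately have "sp ?S \<le> k" unfolding sp_def by simp
    then show ?thesis using lowb[OF wfS isS] by simp
  qed
  have part1: "sp_floor ?S = k" unfolding sp_floor_def
  proof (rule Least_equality)
    show "\<exists>H. wf_graph H \<and> is_minor ?S H \<and> sp H = k" using wfS isS spS by blast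
    fix y assume "\<exists>H. wf_graph H \<and> is_minor ?S H \<and> sp H = y"
    then show "k \<le> y" using lowb by blast
  qed
  have part2: "sp_floor G \<noteq> k" if G: "wf_graph G" "is_minor G ?S" "\<not> graph_iso G ?S" for G
  proof -
    obtain G' where G': "minor_step\<^sup>*\<^sup>* ?S G'" "graph_iso G' G" using G(2) unfolding is_minor_def by blast
    from G'(1) show ?thesis
    proof (cases rule: converse_rtranclpE)
      case base
      then have "graph_iso ?S G" using G'(2) by simp
      then have "graph_iso G ?S" using iso_sym wf_ww[OF wfS] by blast
      then show ?thesis using G(3) by blast
    next
      case (step G1)
      obtain H A where HA: "wf_graph H" "sp H < k" "minor_step\<^sup>*\<^sup>* H A" "eqv G1 A"
        using first_step[OF step(1) assms] by blast
      have "is_minor G H" by (rule minor_via[OF HA(3,4) step(2) G'(2)])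
      then have "sp_floor G \<le> sp H" by (rule sp_floor_le[OF HA(1)])
      then show ?thesis using HA(2) by simp
    qed
  qed
  show ?thesis using part1 part2 by blast
qed

end
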